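(* Let $(X,d)$ be a compact metric space, $k\geq1$, $T:\mathbb{Z}^k\times X\to X$ a continuous action, and $c>0$ such that any two distinct $x,y\in X$ satisfy $\sup_{u\in\mathbb{Z}^k}d(T^ux,T^uy)>c$. Fix an integer $l>0$ such that whenever $d(x,y)\geq c/2$ there is $u\in\mathbb{Z}^k$ with $|u|\leq l$ and $d(T^ux,T^uy)\geq c$, and fix $\alpha>1$ with $\alpha^l<2$. For $x\neq y$ let $\mathbf{n}(x,y)=\min\{n\geq0:\exists u\in\mathbb{Z}^k,\ |u|\leq n,\ d(T^ux,T^uy)\geq c\}$, let $\mathbf{n}(x,x)=\infty$, and set $\rho(x,y)=\alpha^{-\mathbf{n}(x,y)}$ (so $\rho(x,x)=0$). Then: (1) $\rho(x,y)=\rho(y,x)$; (2) $\rho(x,y)=0$ iff $x=y$; (3) $\rho(x,z)\leq2\max(\rho(x,y),\rho(y,z))$ for all $x,y,z$; (4) if $x_n\to x$ and $y_n\to y$ then $\limsup_{n\to\infty}\rho(x_n,y_n)\leq\rho(x,y)$; (5) the balls $B_r(x,\rho)=\{y:\rho(x,y)<r\}$ ($x\in X$, $r>0$) form an open base of the topology of $X$.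
   Context: $|u|$ denotes the norm of $u\in\mathbb{Z}^k$ (a fixed norm, e.g. Euclidean). Such an integer $l$ exists by expansiveness and compactness. *)

theory Defs
  imports "HOL-Analysis.Analysis" "HOL-Library.Extended_Nat" "HOL-Library.Liminf_Limsup" "HOL-Library.Function_Algebras"
begin

text \<open>Elements of Z^k are modelled as functions 'k => int for a finite index type 'k
 (so k = CARD('k) >= 1). The fixed norm is the Euclidean one.\<close>

definition znorm :: "('k::finite \<Rightarrow> int) \<Rightarrow> real" where
  "znorm u = sqrt (\<Sum>i\<in>UNIV. (real_of_int (u i))^2)"

definition cont_action :: "'a::metric_space set \<Rightarrow> (('k::finite \<Rightarrow> int) \<Rightarrow> 'a \<Rightarrow> 'a) \<Rightarrow> bool" where
  "cont_action X T \<longleftrightarrow>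
     (\<forall>u. T u ` X \<subseteq> X \<and> continuous_on X (T u)) \<and>
     (\<forall>x\<in>X. T 0 x = x) \<and>
     (\<forall>u v. \<forall>x\<in>X. T (u + v) x = T u (T v x))"

definition nn :: "(('k::finite \<Rightarrow> int) \<Rightarrow> 'a::metric_space \<Rightarrow> 'a) \<Rightarrow> real \<Rightarrow> 'a \<Rightarrow> 'a \<Rightarrow> enat" where
  "nn T c x y = (if x = y then \<infinity>
     else enat (LEAST n::nat. \<exists>u. znorm u \<le> real n \<and> dist (T u x) (T u y) \<ge> c))"

definition rho :: "(('k::finite \<Rightarrow> int) \<Rightarrow> 'a::metric_space \<Rightarrow> 'a) \<Rightarrow> real \<Rightarrow> real \<Rightarrow> 'a \<Rightarrow> 'a \<Rightarrow> real" where
  "rho T c \<alpha> x y = (case nn T c x y of \<infinity> \<Rightarrow> 0 | enat n \<Rightarrow> inverse (\<alpha> ^ n))"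

end

theory Submission imports Defs begin

lemma znorm_L2: "znorm u = L2_set (\<lambda>i. real_of_int (u i)) UNIV"
  by (simp add: znorm_def L2_set_def)

lemma znorm_nonneg: "0 \<le> znorm u"
  by (simp add: znorm_L2)

lemma znorm_add: "znorm (u + v) \<le> znorm u + znorm v"
  unfolding znorm_L2 using L2_set_triangle_ineq[of "\<lambda>i. real_of_int (u i)" "\<lambda>i. real_of_int (v i)" UNIV]
  by simp

lemma znorm_comp: "\<bar>real_of_int (u i)\<bar> \<le> znorm u"
proof -
  have "\<bar>real_of_int (u i)\<bar> \<le> L2_set (\<lambda>i. \<bar>real_of_int (u i)\<bar>) UNIV"
    by (rule member_le_L2_set) auto
  also have "\<dots> = znorm u" by (simp add: znorm_L2 L2_set_def)
  finally show ?thesis .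
qed

lemma finite_znorm: "finite {u::'k::finite \<Rightarrow> int. znorm u + 1 \<le> real N}"
proof -
  have "{u::'k \<Rightarrow> int. znorm u + 1 \<le> real N} \<subseteq> Pi\<^sub>E UNIV (\<lambda>_. {- int N..int N})"
  proof
    fix u :: "'k \<Rightarrow> int" assume "u \<in> {u. znorm u + 1 \<le> real N}"
    then have "\<bar>real_of_int (u i)\<bar> \<le> real N" for i using znorm_comp[of u i] by simp
    then have "\<bar>u i\<bar> \<le> int N" for i by (metis of_int_abs of_int_of_nat_eq of_int_le_iff)
    then show "u \<in> Pi\<^sub>E UNIV (\<lambda>_. {- int N..int N})" by (auto simp: PiE_UNIV_domain abs_le_iff) (metis add.inverse_inverse neg_le_iff_le)
  qed
  moreover have "finite (Pi\<^sub>E (UNIV::'k set) (\<lambda>_. {- int N..int N}))"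
    by (rule finite_PiE) auto
  ultimately show ?thesis by (rule finite_subset)
qed

context
  fixes X :: "'a::metric_space set"
    and T :: "('k::finite \<Rightarrow> int) \<Rightarrow> 'a \<Rightarrow> 'a"
    and c \<alpha> :: real
  assumes cX: "compact X"
    and act: "cont_action X T"
    and cpos: "c > 0"
    and expansive: "\<forall>x\<in>X. \<forall>y\<in>X. x \<noteq> y \<longrightarrow> (SUP u. dist (T u x) (T u y)) > c"
    and a1: "\<alpha> > 1"
begin

lemma TX: "x \<in> X \<Longrightarrow> T u x \<in> X"
  using act unfolding cont_action_def by blast

lemma ex_sep:
  assumes "x \<in> X" "y \<in> X" "x \<noteq> y"
  shows "\<exists>u. c < dist (T u x) (T u y)"
proof -
  have "bounded X" using cX by (rule compact_imp_bounded)
  then obtain B where B: "\<forall>z\<in>X. dist x z \<le> B" using bounded_any_center by blast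
  have "dist (T u x) (T u y) \<le> 2 * B" for u
  proof -
    have "dist (T u x) (T u y) \<le> dist x (T u x) + dist x (T u y)" by (rule dist_triangle3)
    also have "\<dots> \<le> 2 * B" using B TX assms by (smt (verit))
    finally show ?thesis .
  qed
  then have bdd: "bdd_above (range (\<lambda>u. dist (T u x) (T u y)))" by (intro bdd_aboveI2[where M="2*B"]) auto
  have "c < (SUP u. dist (T u x) (T u y))" using expansive assms by blast
  then show ?thesis using less_cSUP_iff[OF _ bdd] by auto
qed

lemma rho_nonneg: "0 \<le> rho T c \<alpha> x y"
  using a1 by (auto simp: rho_def split: enat.splits)

lemma rho_struct:
  assumes "x \<in> X" "y \<in> X" "x \<noteq> y"
  shows "\<exists>m. rho T c \<alpha> x y = inverse (\<alpha> ^ m) \<and> (\<exists>u. znorm u \<le> real m \<and> c \<le> dist (T u x) (T u y))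
     \<and> (\<forall>u. znorm u + 1 \<le> real m \<longrightarrow> dist (T u x) (T u y) < c)"
proof -
  define P where "P = (\<lambda>n::nat. \<exists>u. znorm u \<le> real n \<and> dist (T u x) (T u y) \<ge> c)"
  define m where "m = (LEAST n. P n)"
  obtain u where u: "c < dist (T u x) (T u y)" using ex_sep assms by blast
  have "P (nat \<lceil>znorm u\<rceil>)" unfolding P_def using u by (intro exI[of _ u]) (auto, linarith)
  then have Pm: "P m" unfolding m_def by (rule LeastI)
  have rho: "rho T c \<alpha> x y = inverse (\<alpha> ^ m)" using assms by (simp add: rho_def nn_def m_def P_def)
  have "dist (T v x) (T v y) < c" if "znorm v + 1 \<le> real m" for v
  proof (rule ccontr)
    assume "\<not> ?thesis"
    then have "P (m - 1)" unfolding P_def using that znorm_nonneg[of v] by (intro exI[of _ v]) auto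
    then have "m \<le> m - 1" unfolding m_def by (rule Least_le)
    moreover have "m \<ge> 1" using that znorm_nonneg[of v] by simp
    ultimately show False by simp
  qed
  then show ?thesis using rho Pm unfolding P_def by blast
qed

lemma rho_ge:
  assumes "x \<noteq> y" "znorm u \<le> real n" "c \<le> dist (T u x) (T u y)"
  shows "inverse (\<alpha> ^ n) \<le> rho T c \<alpha> x y"
proof -
  define P where "P = (\<lambda>n::nat. \<exists>u. znorm u \<le> real n \<and> dist (T u x) (T u y) \<ge> c)"
  have "P n" unfolding P_def using assms by blast
  then have "(LEAST n. P n) \<le> n" by (rule Least_le)
  then have "\<alpha> ^ (LEAST n. P n) \<le> \<alpha> ^ n" using a1 by (intro power_increasing) auto
  then have "inverse (\<alpha> ^ n) \<le> inverse (\<alpha> ^ (LEAST n. P n))"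
    using a1 by (intro le_imp_inverse_le) auto
  then show ?thesis using assms(1) by (simp add: rho_def nn_def P_def)
qed

lemma rho_le:
  assumes "x \<in> X" "y \<in> X" "\<forall>u. znorm u + 1 \<le> real N \<longrightarrow> dist (T u x) (T u y) < c"
  shows "rho T c \<alpha> x y \<le> inverse (\<alpha> ^ N)"
proof (cases "x = y")
  case True then show ?thesis using a1 by (simp add: rho_def nn_def)
next
  case False
  then obtain m u where m: "rho T c \<alpha> x y = inverse (\<alpha> ^ m)" "znorm u \<le> real m" "c \<le> dist (T u x) (T u y)"
    using rho_struct assms by blast
  have "\<not> m + 1 \<le> N"
  proof
    assume "m + 1 \<le> N"
    then have "znorm u + 1 \<le> real N" using m(2) by linarith
    then show False using assms(3) m(3) by force
  qed
  then have "\<alpha> ^ N \<le> \<alpha> ^ m" using a1 by (intro power_increasing) auto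
  then show ?thesis unfolding m(1) using a1 by (intro le_imp_inverse_le) auto
qed

lemma rho_eventually:
  assumes ev: "eventually (\<lambda>z. f z \<in> X \<and> g z \<in> X) F"
    and f: "(f \<longlongrightarrow> x) F" and g: "(g \<longlongrightarrow> y) F" and xy: "x \<in> X" "y \<in> X"
    and cond: "\<forall>u. znorm u + 1 \<le> real N \<longrightarrow> dist (T u x) (T u y) < c"
  shows "eventually (\<lambda>z. rho T c \<alpha> (f z) (g z) \<le> inverse (\<alpha> ^ N)) F"
proof -
  let ?S = "{u::'k \<Rightarrow> int. znorm u + 1 \<le> real N}"
  have "\<forall>u\<in>?S. eventually (\<lambda>z. dist (T u (f z)) (T u (g z)) < c) F"
  proof
    fix u assume "u \<in> ?S"
    then have lt: "dist (T u x) (T u y) < c" using cond by blast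
    have cu: "continuous_on X (T u)" using act unfolding cont_action_def by blast
    have "((\<lambda>z. T u (f z)) \<longlongrightarrow> T u x) F"
      by (rule continuous_on_tendsto_compose[OF cu f xy(1)]) (use ev in \<open>auto elim: eventually_mono\<close>)
    moreover have "((\<lambda>z. T u (g z)) \<longlongrightarrow> T u y) F"
      by (rule continuous_on_tendsto_compose[OF cu g xy(2)]) (use ev in \<open>auto elim: eventually_mono\<close>)
    ultimately have "((\<lambda>z. dist (T u (f z)) (T u (g z))) \<longlongrightarrow> dist (T u x) (T u y)) F"
      by (rule tendsto_dist)
    then show "eventually (\<lambda>z. dist (T u (f z)) (T u (g z)) < c) F"
      using lt by (rule order_tendstoD)
  qed
  then have "eventually (\<lambda>z. \<forall>u\<in>?S. dist (T u (f z)) (T u (g z)) < c) F"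
    by (rule eventually_ball_finite[OF finite_znorm])
  then show ?thesis using ev
    by eventually_elim (intro rho_le, auto)
qed

end

theorem lemma4p3:
  fixes X :: "'a::metric_space set"
    and T :: "('k::finite \<Rightarrow> int) \<Rightarrow> 'a \<Rightarrow> 'a"
    and c \<alpha> :: real and l :: nat
  assumes "compact X"
    and "cont_action X T"
    and "c > 0"
    and expansive: "\<forall>x\<in>X. \<forall>y\<in>X. x \<noteq> y \<longrightarrow> (SUP u. dist (T u x) (T u y)) > c"
    and "l > 0"
    and l_prop: "\<forall>x\<in>X. \<forall>y\<in>X. dist x y \<ge> c / 2 \<longrightarrow>
                   (\<exists>u. znorm u \<le> real l \<and> dist (T u x) (T u y) \<ge> c)"
    and "\<alpha> > 1" and "\<alpha> ^ l < 2"
  shows "(\<forall>x\<in>X. \<forall>y\<in>X. rho T c \<alpha> x y = rho T c \<alpha> y x)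
    \<and> (\<forall>x\<in>X. \<forall>y\<in>X. rho T c \<alpha> x y = 0 \<longleftrightarrow> x = y)
    \<and> (\<forall>x\<in>X. \<forall>y\<in>X. \<forall>z\<in>X. rho T c \<alpha> x z \<le> 2 * max (rho T c \<alpha> x y) (rho T c \<alpha> y z))
    \<and> (\<forall>xs ys x y. (\<forall>n. xs n \<in> X \<and> ys n \<in> X) \<longrightarrow> x \<in> X \<longrightarrow> y \<in> X \<longrightarrow>
          xs \<longlonglongrightarrow> x \<longrightarrow> ys \<longlonglongrightarrow> y \<longrightarrow>
          limsup (\<lambda>n. ereal (rho T c \<alpha> (xs n) (ys n))) \<le> ereal (rho T c \<alpha> x y))
    \<and> (\<forall>x\<in>X. \<forall>r>0. openin (top_of_set X) {y\<in>X. rho T c \<alpha> x y < r})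
    \<and> (\<forall>U. openin (top_of_set X) U \<longrightarrow>
          (\<forall>x\<in>U. \<exists>z\<in>X. \<exists>r>0. x \<in> {y\<in>X. rho T c \<alpha> z y < r} \<and> {y\<in>X. rho T c \<alpha> z y < r} \<subseteq> U))"
proof -
  note H = assms(1,2,3) expansive assms(7)
  have TXl: "\<And>x u. x \<in> X \<Longrightarrow> T u x \<in> X" using TX[OF H] by blast
  have actT: "\<And>u v x. x \<in> X \<Longrightarrow> T (u + v) x = T u (T v x)" using assms(2) unfolding cont_action_def by blast
  have P1: "\<forall>x\<in>X. \<forall>y\<in>X. rho T c \<alpha> x y = rho T c \<alpha> y x"
  proof (intro ballI)
    fix x y assume "x \<in> X" "y \<in> X"
    have "nn T c x y = nn T c y x"
      by (cases "x = y") (simp_all add: nn_def dist_commute)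
    then show "rho T c \<alpha> x y = rho T c \<alpha> y x" by (simp add: rho_def)
  qed
  have P2: "\<forall>x\<in>X. \<forall>y\<in>X. rho T c \<alpha> x y = 0 \<longleftrightarrow> x = y"
  proof (intro ballI iffI)
    fix x y assume xy: "x \<in> X" "y \<in> X" "rho T c \<alpha> x y = 0"
    show "x = y"
    proof (rule ccontr)
      assume "x \<noteq> y"
      then obtain m where "rho T c \<alpha> x y = inverse (\<alpha> ^ m)" using rho_struct[OF H] xy by blast
      then show False using xy(3) assms(7) by simp
    qed
  next
    fix x y :: 'a assume "x = y" then show "rho T c \<alpha> x y = 0" by (simp add: rho_def nn_def)
  qed
  have P3: "\<forall>x\<in>X. \<forall>y\<in>X. \<forall>z\<in>X. rho T c \<alpha> x z \<le> 2 * max (rho T c \<alpha> x y) (rho T c \<alpha> y z)"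
  proof (intro ballI)
    fix x y z assume xyz: "x \<in> X" "y \<in> X" "z \<in> X"
    show "rho T c \<alpha> x z \<le> 2 * max (rho T c \<alpha> x y) (rho T c \<alpha> y z)"
    proof (cases "x = z")
      case True
      have "rho T c \<alpha> x z = 0" using True by (simp add: rho_def nn_def)
      then show ?thesis using rho_nonneg[OF H, of x y] by simp
    next
      case False
      then obtain m u where m: "rho T c \<alpha> x z = inverse (\<alpha> ^ m)" "znorm u \<le> real m"
          "c \<le> dist (T u x) (T u z)"
        using rho_struct[OF H] xyz by blast
      have key: "rho T c \<alpha> x z \<le> 2 * rho T c \<alpha> p q"
        if pq: "p \<in> X" "q \<in> X" "c / 2 \<le> dist (T u p) (T u q)" for p q
      proof -
        obtain v where v: "znorm v \<le> real l" "c \<le> dist (T v (T u p)) (T v (T u q))"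
          using l_prop pq TXl by blast
        have "p \<noteq> q" using pq(3) assms(3) by auto
        moreover have "znorm (v + u) \<le> real (m + l)" using znorm_add[of v u] v(1) m(2) by simp
        moreover have "c \<le> dist (T (v + u) p) (T (v + u) q)" using v(2) actT pq by simp
        ultimately have ge: "inverse (\<alpha> ^ (m + l)) \<le> rho T c \<alpha> p q" by (rule rho_ge[OF H])
        have "rho T c \<alpha> x z = \<alpha> ^ l * inverse (\<alpha> ^ (m + l))"
          using m(1) assms(7) by (simp add: power_add)
        also have "\<dots> \<le> 2 * inverse (\<alpha> ^ (m + l))"
          using assms(7,8) by (intro mult_right_mono) auto
        also have "\<dots> \<le> 2 * rho T c \<alpha> p q" using ge by simp
        finally show ?thesis .
      qed
      have "c \<le> dist (T u x) (T u y) + dist (T u y) (T u z)"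
        using m(3) dist_triangle[of "T u x" "T u z" "T u y"] by simp
      then have "c / 2 \<le> dist (T u x) (T u y) \<or> c / 2 \<le> dist (T u y) (T u z)" by linarith
      then show ?thesis
      proof
        assume "c / 2 \<le> dist (T u x) (T u y)"
        then show ?thesis using key[of x y] xyz by simp
      next
        assume "c / 2 \<le> dist (T u y) (T u z)"
        then show ?thesis using key[of y z] xyz by simp
      qed
    qed
  qed
  have P4: "\<forall>xs ys x y. (\<forall>n. xs n \<in> X \<and> ys n \<in> X) \<longrightarrow> x \<in> X \<longrightarrow> y \<in> X \<longrightarrow>
          xs \<longlonglongrightarrow> x \<longrightarrow> ys \<longlonglongrightarrow> y \<longrightarrow>
          limsup (\<lambda>n. ereal (rho T c \<alpha> (xs n) (ys n))) \<le> ereal (rho T c \<alpha> x y)"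
  proof (intro allI impI)
    fix xs ys x y assume A: "\<forall>n. xs n \<in> X \<and> ys n \<in> X" "x \<in> X" "y \<in> X" "xs \<longlonglongrightarrow> x" "ys \<longlonglongrightarrow> y"
    have LS: "limsup (\<lambda>n. ereal (rho T c \<alpha> (xs n) (ys n))) \<le> ereal (inverse (\<alpha> ^ N))"
      if cond: "\<forall>u. znorm u + 1 \<le> real N \<longrightarrow> dist (T u x) (T u y) < c" for N
    proof (rule Limsup_bounded)
      have "eventually (\<lambda>n. rho T c \<alpha> (xs n) (ys n) \<le> inverse (\<alpha> ^ N)) sequentially"
        by (rule rho_eventually[OF H _ A(4,5,2,3) cond]) (use A(1) in simp)
      then show "eventually (\<lambda>n. ereal (rho T c \<alpha> (xs n) (ys n)) \<le> ereal (inverse (\<alpha> ^ N))) sequentially"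
        by eventually_elim simp
    qed
    show "limsup (\<lambda>n. ereal (rho T c \<alpha> (xs n) (ys n))) \<le> ereal (rho T c \<alpha> x y)"
    proof (cases "x = y")
      case False
      then obtain m where "rho T c \<alpha> x y = inverse (\<alpha> ^ m)"
          "\<forall>u. znorm u + 1 \<le> real m \<longrightarrow> dist (T u x) (T u y) < c"
        using rho_struct[OF H] A by blast
      then show ?thesis using LS[of m] by simp
    next
      case True
      have r0: "rho T c \<alpha> x y = 0" using True by (simp add: rho_def nn_def)
      show ?thesis unfolding r0
      proof (rule ereal_le_epsilon)
        fix e :: ereal assume e: "0 < e"
        show "limsup (\<lambda>n. ereal (rho T c \<alpha> (xs n) (ys n))) \<le> ereal 0 + e"
        proof (cases e)
          case (real r)
          then have "r > 0" using e by simp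
          obtain N where N: "inverse r < \<alpha> ^ N" using real_arch_pow[OF assms(7)] by blast
          have "inverse (\<alpha> ^ N) < r"
            using N \<open>r > 0\<close> by (metis less_imp_inverse_less inverse_inverse_eq inverse_positive_iff_positive)
          moreover have "limsup (\<lambda>n. ereal (rho T c \<alpha> (xs n) (ys n))) \<le> ereal (inverse (\<alpha> ^ N))"
            by (rule LS) (simp add: True assms(3))
          ultimately have "limsup (\<lambda>n. ereal (rho T c \<alpha> (xs n) (ys n))) \<le> ereal r"
            by (meson ereal_less_eq(3) less_imp_le order_trans)
          then show ?thesis using real by simp
        qed (use e in auto)
      qed
    qed
  qed
  have P5: "\<forall>x\<in>X. \<forall>r>0. openin (top_of_set X) {y\<in>X. rho T c \<alpha> x y < r}"
  proof (intro ballI allI impI)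
    fix x r assume x: "x \<in> X" and r: "(r::real) > 0"
    show "openin (top_of_set X) {y\<in>X. rho T c \<alpha> x y < r}"
      unfolding openin_euclidean_subtopology_iff
    proof (intro conjI ballI)
      fix y0 assume y0: "y0 \<in> {y\<in>X. rho T c \<alpha> x y < r}"
      obtain N where N: "inverse (\<alpha> ^ N) < r"
        "\<forall>u. znorm u + 1 \<le> real N \<longrightarrow> dist (T u x) (T u y0) < c"
      proof (cases "x = y0")
        case True
        obtain N where N: "inverse r < \<alpha> ^ N" using real_arch_pow[OF assms(7)] by blast
        have "inverse (\<alpha> ^ N) < r"
          using N r by (metis less_imp_inverse_less inverse_inverse_eq inverse_positive_iff_positive)
        then show ?thesis using that[of N] True assms(3) by simp
      next
        case False
        then obtain m where "rho T c \<alpha> x y0 = inverse (\<alpha> ^ m)"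
            "\<forall>u. znorm u + 1 \<le> real m \<longrightarrow> dist (T u x) (T u y0) < c"
          using rho_struct[OF H] x y0 by blast
        then show ?thesis using that[of m] y0 by simp
      qed
      have "eventually (\<lambda>z. rho T c \<alpha> ((\<lambda>_. x) z) (id z) \<le> inverse (\<alpha> ^ N)) (at y0 within X)"
      proof (rule rho_eventually[OF H _ _ _ x _ N(2)])
        show "eventually (\<lambda>z. x \<in> X \<and> id z \<in> X) (at y0 within X)"
          unfolding eventually_at using x by (auto intro: exI[of _ 1])
      qed (use y0 in \<open>auto intro: tendsto_ident_at\<close>)
      then obtain d where d: "d > 0" "\<forall>z\<in>X. z \<noteq> y0 \<and> dist z y0 < d \<longrightarrow> rho T c \<alpha> x z \<le> inverse (\<alpha> ^ N)"
        unfolding eventually_at by auto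
      show "\<exists>e>0. \<forall>x'\<in>X. dist x' y0 < e \<longrightarrow> x' \<in> {y\<in>X. rho T c \<alpha> x y < r}"
      proof (intro exI[of _ d] conjI ballI impI)
        fix x' assume x': "x' \<in> X" "dist x' y0 < d"
        show "x' \<in> {y\<in>X. rho T c \<alpha> x y < r}"
        proof (cases "x' = y0")
          case True then show ?thesis using y0 by simp
        next
          case False then show ?thesis using d(2) x' N(1) by fastforce
        qed
      qed (use d in simp)
    qed auto
  qed
  have P6: "\<forall>U. openin (top_of_set X) U \<longrightarrow>
          (\<forall>x\<in>U. \<exists>z\<in>X. \<exists>r>0. x \<in> {y\<in>X. rho T c \<alpha> z y < r} \<and> {y\<in>X. rho T c \<alpha> z y < r} \<subseteq> U)"
  proof (intro allI impI ballI)
    fix U x0 assume U: "openin (top_of_set X) U" and x0: "x0 \<in> U"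
    then have x0X: "x0 \<in> X" by (meson openin_imp_subset subsetD)
    obtain \<epsilon> where eps: "\<epsilon> > 0" "\<forall>y\<in>X. dist y x0 < \<epsilon> \<longrightarrow> y \<in> U"
      using U x0 unfolding openin_euclidean_subtopology_iff by blast
    define K where "K = X \<inter> - ball x0 \<epsilon>"
    have cK: "compact K" unfolding K_def using assms(1) by (intro compact_Int_closed) auto
    have "\<forall>u. \<exists>V. open V \<and> X \<inter> (\<lambda>y. dist (T u x0) (T u y)) -` {c<..} = X \<inter> V"
    proof
      fix u
      have cu: "continuous_on X (T u)" using assms(2) unfolding cont_action_def by blast
      have "continuous_on X (\<lambda>y. dist (T u x0) (T u y))"
        by (rule continuous_on_dist[OF continuous_on_const cu])
      then have "openin (top_of_set X) (X \<inter> (\<lambda>y. dist (T u x0) (T u y)) -` {c<..})"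
        by (rule continuous_openin_preimage_gen) auto
      then show "\<exists>V. open V \<and> X \<inter> (\<lambda>y. dist (T u x0) (T u y)) -` {c<..} = X \<inter> V"
        unfolding openin_open by blast
    qed
    then have "\<exists>V. \<forall>u. open (V u) \<and> X \<inter> (\<lambda>y. dist (T u x0) (T u y)) -` {c<..} = X \<inter> V u"
      by (rule choice)
    then obtain V where V0: "\<forall>u. open (V u) \<and> X \<inter> (\<lambda>y. dist (T u x0) (T u y)) -` {c<..} = X \<inter> V u"
      by blast
    have V: "\<And>u. open (V u)"
        "\<And>u. X \<inter> (\<lambda>y. dist (T u x0) (T u y)) -` {c<..} = X \<inter> V u"
      using V0 by blast+
    have cover: "K \<subseteq> (\<Union>u\<in>UNIV. V u)"
    proof
      fix y assume y: "y \<in> K"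
      then have "y \<in> X" "y \<noteq> x0" using eps(1) by (auto simp: K_def)
      then obtain u where "c < dist (T u x0) (T u y)" using ex_sep[OF H x0X \<open>y \<in> X\<close>] by auto
      then have "y \<in> X \<inter> V u" using V(2)[of u] \<open>y \<in> X\<close> by blast
      then show "y \<in> (\<Union>u\<in>UNIV. V u)" by blast
    qed
    obtain C where C: "finite C" "K \<subseteq> (\<Union>u\<in>C. V u)"
      by (rule compactE_image[OF cK, of UNIV V, OF V(1) cover]) blast
    define N where "N = nat \<lceil>\<Sum>u\<in>C. znorm u\<rceil>"
    have Kge: "inverse (\<alpha> ^ N) \<le> rho T c \<alpha> x0 y" if y: "y \<in> K" for y
    proof -
      obtain u where u: "u \<in> C" "y \<in> V u" using C y by blast
      have yX: "y \<in> X" "y \<noteq> x0" using y eps(1) by (auto simp: K_def)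
      then have "c < dist (T u x0) (T u y)" using V(2)[of u] u(2) by blast
      moreover have "znorm u \<le> (\<Sum>u\<in>C. znorm u)"
        using C(1) u(1) by (intro member_le_sum) (auto simp: znorm_nonneg)
      then have "znorm u \<le> real N" unfolding N_def by linarith
      ultimately show ?thesis using yX by (intro rho_ge[OF H]) auto
    qed
    have rpos: "inverse (\<alpha> ^ N) > 0" using assms(7) by simp
    show "\<exists>z\<in>X. \<exists>r>0. x0 \<in> {y\<in>X. rho T c \<alpha> z y < r} \<and> {y\<in>X. rho T c \<alpha> z y < r} \<subseteq> U"
    proof (intro bexI[of _ x0] exI[of _ "inverse (\<alpha> ^ N)"] conjI subsetI)
      show "x0 \<in> {y\<in>X. rho T c \<alpha> x0 y < inverse (\<alpha> ^ N)}"
        using x0X rpos by (simp add: rho_def nn_def)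
    next
      fix y assume y: "y \<in> {y\<in>X. rho T c \<alpha> x0 y < inverse (\<alpha> ^ N)}"
      then have "y \<notin> K" using Kge[of y] by auto
      then have "dist y x0 < \<epsilon>" using y by (auto simp: K_def dist_commute)
      then show "y \<in> U" using eps y by blast
    qed (use rpos x0X in auto)
  qed
  show ?thesis using P1 P2 P3 P4 P5 P6 by blast
qed

end
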